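(* Let $b\in H^\infty(\mathbb{D})$ with $\|b\|_\infty=1$. Then $|b'(r\xi)|\le 4|b'(\xi)|$ for every $\xi\in\partial\mathbb{D}\setminus\overline{\mathrm{spec}(b)}$ and every $1/2<r<1$.
   Context: $\mathbb{D}$ is the open unit disc, $H^\infty(\mathbb{D})$ the bounded analytic functions, $\|b\|_\infty=\sup_{\mathbb{D}}|b|$. For $b\in H^\infty(\mathbb{D})$ with $\|b\|_\infty=1$, $\mathrm{spec}(b)=\{\xi\in\partial\mathbb{D}: \liminf_{z\to\xi, z\in\mathbb{D}}|b(z)|<1\}$. The function $b$ extends analytically across each arc of the open set $\partial\mathbb{D}\setminus\overline{\mathrm{spec}(b)}$, with $|b|=1$ there; $b'(\xi)$ for such $\xi$ denotes the derivative of this extension. *)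

theory Defs
  imports "HOL-Analysis.Analysis"
begin

definition Hinf_unit :: "(complex \<Rightarrow> complex) \<Rightarrow> bool" where
  "Hinf_unit b \<longleftrightarrow> b holomorphic_on ball 0 1 \<and> bounded (b ` ball 0 1)
      \<and> (SUP z\<in>ball 0 1. norm (b z)) = 1"

definition spec :: "(complex \<Rightarrow> complex) \<Rightarrow> complex set" where
  "spec b = {\<xi> \<in> sphere 0 1.
      Liminf (at \<xi> within ball 0 1) (\<lambda>z. ereal (norm (b z))) < 1}"

text \<open>Derivative at a boundary point of the analytic continuation of b across the boundary:
  the derivative at xi of a function holomorphic on a neighbourhood ball of xi that
  agrees with b on the part of that ball inside the disc.\<close>
definition bdry_deriv :: "(complex \<Rightarrow> complex) \<Rightarrow> complex \<Rightarrow> complex" where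
  "bdry_deriv b \<xi> = (SOME d. \<exists>e>0. \<exists>g. g holomorphic_on ball \<xi> e
       \<and> (\<forall>z\<in>ball \<xi> e \<inter> ball 0 1. g z = b z) \<and> d = deriv g \<xi>)"

end

theory Submission
  imports Defs "HOL-Complex_Analysis.Complex_Analysis"
begin

lemma lim_abs_one:
  assumes "\<eta> \<notin> spec b" "\<eta> \<in> sphere 0 1" "\<forall>z\<in>ball 0 1. cmod (b z) \<le> 1"
  shows "((\<lambda>z. cmod (b z)) \<longlongrightarrow> 1) (at \<eta> within ball 0 1)"
proof -
  have "1 \<le> Liminf (at \<eta> within ball 0 1) (\<lambda>z. ereal (norm (b z)))"
    using assms(1,2) unfolding spec_def by (simp add: not_less)
  then have ev: "\<forall>y<1. eventually (\<lambda>z. y < ereal (norm (b z))) (at \<eta> within ball 0 1)"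
    by (simp add: le_Liminf_iff)
  show ?thesis
  proof (rule order_tendstoI)
    fix a :: real assume "a < 1"
    then show "eventually (\<lambda>z. a < cmod (b z)) (at \<eta> within ball 0 1)"
      using ev[rule_format, of "ereal a"] by simp
  next
    fix a :: real assume "1 < a"
    then show "eventually (\<lambda>z. cmod (b z) < a) (at \<eta> within ball 0 1)"
      using assms(3) by (auto simp: eventually_at_filter intro!: always_eventually)
        (metis dual_order.strict_trans2 mem_ball_0)
  qed
qed

lemma mult_lt1: "0 \<le> (a::real) \<Longrightarrow> a < 1 \<Longrightarrow> 0 \<le> b \<Longrightarrow> b < 1 \<Longrightarrow> a*b < 1"
  using mult_left_mono[of b 1 a] by simp

lemma schwarz_pick:
  assumes hol: "b holomorphic_on ball 0 1" and lt: "\<forall>z\<in>ball 0 1. cmod (b z) < 1"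
    and z: "z \<in> ball 0 1" and w: "w \<in> ball 0 1"
  shows "cmod (b z - b w) * cmod (1 - cnj w * z) \<le> cmod (z - w) * cmod (1 - cnj (b w) * b z)"
proof -
  define h where "h = Moebius_function 0 (b w) \<circ> (b \<circ> Moebius_function 0 (-w))"
  have wn: "norm w < 1" "norm (-w) < 1" using w by auto
  have bwn: "norm (b w) < 1" using lt w by auto
  have bz: "norm (b z) < 1" using lt z by auto
  have zn: "norm z < 1" using z by auto
  have img1: "Moebius_function 0 (-w) ` ball 0 1 \<subseteq> ball 0 1"
    using Moebius_function_norm_lt_1[OF wn(2)] by auto
  have img2: "b ` ball 0 1 \<subseteq> ball 0 1" using lt by auto
  have holh: "h holomorphic_on ball 0 1"
  proof -
    have "(b \<circ> Moebius_function 0 (-w)) holomorphic_on ball 0 1"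
      by (rule holomorphic_on_compose_gen[OF Moebius_function_holomorphic[OF wn(2)] hol img1])
    moreover have "(b \<circ> Moebius_function 0 (-w)) ` ball 0 1 \<subseteq> ball 0 1"
      using img1 img2 by (auto simp: image_subset_iff)
    ultimately show ?thesis unfolding h_def
      by (rule holomorphic_on_compose_gen[OF _ Moebius_function_holomorphic[OF bwn]])
  qed
  have h0: "h 0 = 0"
    by (simp add: h_def Moebius_function_def)
  have hlt: "norm (h u) < 1" if "norm u < 1" for u
  proof -
    have "norm (Moebius_function 0 (-w) u) < 1" using Moebius_function_norm_lt_1[OF wn(2) that] .
    then have "norm (b (Moebius_function 0 (-w) u)) < 1" using lt by auto
    then show ?thesis unfolding h_def using Moebius_function_norm_lt_1[OF bwn] by auto
  qed
  define u where "u = Moebius_function 0 w z"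
  have un: "norm u < 1" unfolding u_def using Moebius_function_norm_lt_1[OF wn(1) zn] .
  have "Moebius_function 0 (-w) u = z"
    unfolding u_def by (rule Moebius_function_compose) (use wn zn in auto)
  then have hu: "h u = Moebius_function 0 (b w) (b z)" by (simp add: h_def)
  have "norm (h u) \<le> norm u"
    using Schwarz_Lemma(1)[OF holh h0 _ un] hlt by auto
  then have ineq: "cmod ((b z - b w) / (1 - cnj (b w) * b z)) \<le> cmod ((z - w) / (1 - cnj w * z))"
    using hu by (simp add: u_def Moebius_function_def)
  have d1: "cmod (1 - cnj (b w) * b z) > 0"
  proof -
    have "cmod (cnj (b w) * b z) < 1" using bwn bz by (simp add: norm_mult mult_lt1)
    then show ?thesis by (metis norm_one zero_less_norm_iff diff_eq_eq right_minus_eq less_irrefl add_0)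
  qed
  have d2: "cmod (1 - cnj w * z) > 0"
  proof -
    have "cmod (cnj w * z) < 1" using wn zn by (simp add: norm_mult mult_lt1)
    then show ?thesis by (metis norm_one zero_less_norm_iff diff_eq_eq right_minus_eq less_irrefl add_0)
  qed
  from ineq d1 d2 show ?thesis
    by (simp add: norm_divide divide_simps mult.commute)
qed

lemma cmod_one_minus_sq: "cmod (1 - cnj a * a) = 1 - (cmod a)^2" if "cmod a \<le> 1"
proof -
  have "cnj a * a = of_real ((cmod a)^2)" by (metis complex_norm_square mult.commute)
  then have "cmod (1 - cnj a * a) = cmod (of_real (1 - (cmod a)^2) :: complex)" by simp
  also have "\<dots> = \<bar>1 - (cmod a)^2\<bar>" by (rule norm_of_real)
  also have "\<dots> = 1 - (cmod a)^2" using that power_le_one[of "cmod a" 2] by simp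
  finally show ?thesis .
qed

lemma sq1: "cmod z < 1 \<Longrightarrow> (cmod z)^2 < 1"
  by (simp add: abs_square_less_1)

lemma alg_aux: "(A::real)*Q \<le> B*P \<Longrightarrow> P - A = X \<Longrightarrow> Q - B = Y \<Longrightarrow> Y*P \<le> X*Q"
proof -
  assume a: "A*Q \<le> B*P" "P - A = X" "Q - B = Y"
  have "X*Q - Y*P = B*P - A*Q" using a(2,3) by (auto simp: algebra_simps)
  then show ?thesis using a(1) by linarith
qed

lemma sq_identity: "(cmod (1 - cnj a * b))^2 - (cmod (a - b))^2 = (1 - (cmod a)^2) * (1 - (cmod b)^2)"
  unfolding cmod_power2 by (simp add: algebra_simps power2_eq_square)

lemma sp2:
  assumes hol: "b holomorphic_on ball 0 1" and lt: "\<forall>z\<in>ball 0 1. cmod (b z) < 1"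
    and z: "z \<in> ball 0 1" and w: "w \<in> ball 0 1"
  shows "(1 - (cmod z)^2) * (1 - (cmod w)^2) * (cmod (1 - cnj (b w) * b z))^2
     \<le> (1 - (cmod (b z))^2) * (1 - (cmod (b w))^2) * (cmod (1 - cnj w * z))^2"
proof -
  have sp: "cmod (b z - b w) * cmod (1 - cnj w * z) \<le> cmod (z - w) * cmod (1 - cnj (b w) * b z)"
    by (rule schwarz_pick[OF hol lt z w])
  then have "(cmod (b z - b w) * cmod (1 - cnj w * z))^2 \<le> (cmod (z - w) * cmod (1 - cnj (b w) * b z))^2"
    by (simp add: power_mono)
  then have A: "(cmod (b w - b z))^2 * (cmod (1 - cnj w * z))^2 \<le> (cmod (w - z))^2 * (cmod (1 - cnj (b w) * b z))^2"
    by (simp add: power_mult_distrib norm_minus_commute)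
  have I1: "(cmod (1 - cnj (b w) * b z))^2 - (cmod (b w - b z))^2 = (1 - (cmod (b w))^2) * (1 - (cmod (b z))^2)"
    by (rule sq_identity)
  have I2: "(cmod (1 - cnj w * z))^2 - (cmod (w - z))^2 = (1 - (cmod w)^2) * (1 - (cmod z)^2)"
    by (rule sq_identity)
  have "((1 - (cmod w)^2) * (1 - (cmod z)^2)) * (cmod (1 - cnj (b w) * b z))^2 \<le>
        ((1 - (cmod (b w))^2) * (1 - (cmod (b z))^2)) * (cmod (1 - cnj w * z))^2"
    by (rule alg_aux[OF A I1 I2])
  then show ?thesis by (simp add: algebra_simps)
qed

lemma deriv_bound:
  assumes hol: "b holomorphic_on ball 0 1" and lt: "\<forall>z\<in>ball 0 1. cmod (b z) < 1"
    and z: "z \<in> ball 0 1"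
  shows "cmod (deriv b z) * (1 - (cmod z)^2) \<le> 1 - (cmod (b z))^2"
proof -
  have D: "(b has_field_derivative deriv b z) (at z)"
    using holomorphic_derivI[OF hol open_ball z] by simp
  then have L1: "((\<lambda>w. cmod ((b w - b z) / (w - z))) \<longlongrightarrow> cmod (deriv b z)) (at z)"
    by (intro tendsto_norm) (simp add: has_field_derivative_iff)
  have ic: "isCont b z"
    using holomorphic_on_imp_continuous_on[OF hol] z continuous_on_interior by fastforce
  have zn: "cmod z < 1" using z by simp
  have bzn: "cmod (b z) < 1" using lt z by simp
  have den: "cmod (1 - cnj z * z) \<noteq> 0"
    using cmod_one_minus_sq[of z] zn sq1[OF zn] by simp
  have L2: "((\<lambda>w. cmod (1 - cnj (b z) * b w) / cmod (1 - cnj z * w)) \<longlongrightarrow>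
        cmod (1 - cnj (b z) * b z) / cmod (1 - cnj z * z)) (at z)"
    by (intro tendsto_intros isCont_tendsto_compose[OF ic] den)
  have ev: "eventually (\<lambda>w. cmod ((b w - b z) / (w - z)) \<le> cmod (1 - cnj (b z) * b w) / cmod (1 - cnj z * w)) (at z)"
  proof -
    have "eventually (\<lambda>w. w \<in> ball 0 1) (at z)"
      using z by (intro eventually_at_in_open') auto
    moreover have "eventually (\<lambda>w. w \<noteq> z) (at z)" by (simp add: eventually_at_filter)
    ultimately show ?thesis
    proof eventually_elim
      case (elim w)
      have sp: "cmod (b w - b z) * cmod (1 - cnj z * w) \<le> cmod (w - z) * cmod (1 - cnj (b z) * b w)"
        by (rule schwarz_pick[OF hol lt elim(1) z])
      have p1: "cmod (w - z) > 0" using elim by simp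
      have p2: "cmod (1 - cnj z * w) > 0"
      proof -
        have "cmod (cnj z * w) < 1" using zn elim(1) by (simp add: norm_mult mult_lt1)
        then show ?thesis by (metis norm_one zero_less_norm_iff diff_eq_eq right_minus_eq less_irrefl add_0)
      qed
      show ?case using sp p1 p2 by (simp add: norm_divide divide_simps mult.commute)
    qed
  qed
  have "cmod (deriv b z) \<le> cmod (1 - cnj (b z) * b z) / cmod (1 - cnj z * z)"
    by (rule tendsto_le[OF _ L2 L1 ev]) simp
  also have "\<dots> = (1 - (cmod (b z))^2) / (1 - (cmod z)^2)"
    using cmod_one_minus_sq[of "b z"] cmod_one_minus_sq[of z] zn bzn by simp
  finally show ?thesis
    using sq1[OF zn] by (simp add: divide_simps)
qed

lemma final_alg:
  fixes D A beta r :: real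
  assumes "0 \<le> D" "0 \<le> A" "A < 1" "0 < r" "r < 1" "0 \<le> beta"
    and h1: "(1 - r^2) * (1 - A)^2 \<le> (1 - A^2) * beta * (1 - r)^2"
    and h2: "D * (1 - r^2) \<le> 1 - A^2"
  shows "D \<le> 4 * beta"
proof -
  have p1: "0 < 1 - r" "0 < 1 - A" using assms by auto
  have "((1 + r) * (1 - A)) * ((1 - r) * (1 - A)) \<le> ((1 + A) * beta * (1 - r)) * ((1 - r) * (1 - A))"
    using h1 by (simp add: power2_eq_square algebra_simps)
  then have k1: "(1 + r) * (1 - A) \<le> (1 + A) * beta * (1 - r)"
    using p1 by (simp add: mult_le_cancel_right_pos)
  have k2: "D * (1 - r) * (1 + r) \<le> (1 - A) * (1 + A)"
    using h2 by (simp add: power2_eq_square algebra_simps)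
  have "D * (1 - r) * (1 + r) * (1 + r) \<le> (1 - A) * (1 + A) * (1 + r)"
    using k2 assms by (simp add: mult_right_mono)
  also have "\<dots> = ((1 + r) * (1 - A)) * (1 + A)" by (simp add: algebra_simps)
  also have "\<dots> \<le> ((1 + A) * beta * (1 - r)) * (1 + A)"
    using k1 assms by (simp add: mult_right_mono)
  finally have "(D * (1 + r) * (1 + r)) * (1 - r) \<le> ((1 + A) * (1 + A) * beta) * (1 - r)"
    by (simp add: algebra_simps)
  then have k3: "D * (1 + r) * (1 + r) \<le> (1 + A) * (1 + A) * beta"
    using p1 by (simp add: mult_le_cancel_right_pos)
  have "(1 + A) * (1 + A) * beta \<le> 4 * beta"
  proof -
    have "(1 + A) * (1 + A) \<le> 2 * 2" using mult_mono[of "1+A" 2 "1+A" 2] assms by simp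
    then show ?thesis using assms by (intro mult_right_mono) auto
  qed
  moreover have "D \<le> D * (1 + r) * (1 + r)"
    using assms by (smt (verit) mult_le_cancel_left1 mult_nonneg_nonneg mult.assoc mult_mono)
  ultimately show ?thesis using k3 by linarith
qed


lemma max_le_boundary:
  assumes U: "open U" "connected U" "bounded U" "U \<noteq> {}" and hol: "G holomorphic_on U"
    and lim: "\<And>\<eta>. \<eta> \<in> frontier U \<Longrightarrow> ((\<lambda>z. cmod (G z)) \<longlongrightarrow> 1) (at \<eta> within U)"
  shows "\<forall>z\<in>U. cmod (G z) \<le> 1"
proof (rule ccontr)
  assume "\<not> (\<forall>z\<in>U. cmod (G z) \<le> 1)"
  then obtain z0 where z0: "z0 \<in> U" "cmod (G z0) > 1" by force
  define h where "h = (\<lambda>z. if z \<in> U then cmod (G z) else 1)"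
  have fU: "frontier U \<inter> U = {}" using U(1) by (auto simp: frontier_def interior_open)
  have contG: "continuous_on U G" using hol holomorphic_on_imp_continuous_on by blast
  have cont: "continuous_on (closure U) h"
    unfolding continuous_on_eq_continuous_within
  proof
    fix x assume x: "x \<in> closure U"
    show "continuous (at x within closure U) h"
    proof (cases "x \<in> U")
      case True
      have "isCont G x" using contG True U(1) continuous_on_eq_continuous_at by blast
      then have "isCont (\<lambda>z. cmod (G z)) x" by (intro continuous_intros)
      moreover have "eventually (\<lambda>z. cmod (G z) = h z) (nhds x)"
        using True U(1) by (intro eventually_nhds_in_open[THEN eventually_mono, of U]) (auto simp: h_def)
      ultimately have "isCont h x"
        using isCont_cong[OF \<open>eventually (\<lambda>z. cmod (G z) = h z) (nhds x)\<close>] by blast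
      then show ?thesis by (rule continuous_at_imp_continuous_within)
    next
      case False
      then have xf: "x \<in> frontier U" using x closure_Un_frontier by blast
      have hx: "h x = 1" using False by (simp add: h_def)
      have l1: "(h \<longlongrightarrow> 1) (at x within U)"
        using lim[OF xf] by (rule Lim_transform_eventually) (auto simp: h_def eventually_at_filter)
      have l2: "(h \<longlongrightarrow> 1) (at x within frontier U)"
        using fU by (intro Lim_transform_eventually[OF tendsto_const]) 
          (auto simp: h_def eventually_at_filter intro!: always_eventually)
      have "(h \<longlongrightarrow> 1) (at x within (U \<union> frontier U))"
        using l1 l2 by (simp add: Lim_within_Un)
      then show ?thesis using hx closure_Un_frontier[of U] by (simp add: continuous_within)
    qed
  qed
  have comp: "compact (closure U)" using U(3) by (simp add: compact_eq_bounded_closed bounded_closure)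
  obtain p where p: "p \<in> closure U" "\<And>y. y \<in> closure U \<Longrightarrow> h y \<le> h p"
    using continuous_attains_sup[OF comp _ cont] U(4) by auto
  have "h z0 \<le> h p" using p(2) z0(1) closure_subset by blast
  then have hp: "h p > 1" using z0 by (simp add: h_def)
  then have pU: "p \<in> U" by (auto simp: h_def split: if_splits)
  have "G constant_on U"
    by (rule maximum_modulus_principle[OF hol U(1,2) U(1) order_refl pU])
      (use p(2) closure_subset pU in \<open>fastforce simp: h_def\<close>)
  then obtain k where k: "\<And>z. z \<in> U \<Longrightarrow> G z = k" unfolding constant_on_def by blast
  have nk: "cmod k > 1" using hp pU k by (simp add: h_def)
  have "frontier U \<noteq> {}"
    using U(3,4) frontier_eq_empty not_bounded_UNIV by blast
  then obtain \<eta> where \<eta>: "\<eta> \<in> frontier U" by blast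
  have "\<eta> \<in> closure U" "\<eta> \<notin> U" using \<eta> fU by (auto simp: frontier_def)
  then have "\<eta> islimpt U" by (simp add: closure_def)
  then have nt: "\<not> trivial_limit (at \<eta> within U)" by (simp add: trivial_limit_within)
  have "((\<lambda>z. cmod (G z)) \<longlongrightarrow> cmod k) (at \<eta> within U)"
    by (rule Lim_transform_eventually[OF tendsto_const]) (auto simp: k eventually_at_filter)
  then have "cmod k = 1" using tendsto_unique[OF nt _ lim[OF \<eta>]] by blast
  then show False using nk by simp
qed

lemma max_boundary:
  assumes U: "open U" "connected U" "bounded U" "U \<noteq> {}" and hol: "G holomorphic_on U"
    and nz: "\<forall>z\<in>U. G z \<noteq> 0"
    and lim: "\<And>\<eta>. \<eta> \<in> frontier U \<Longrightarrow> ((\<lambda>z. cmod (G z)) \<longlongrightarrow> 1) (at \<eta> within U)"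
  shows "\<forall>z\<in>U. cmod (G z) = 1"
proof -
  have a: "\<forall>z\<in>U. cmod (G z) \<le> 1" by (rule max_le_boundary[OF U hol lim])
  have hol': "(\<lambda>z. inverse (G z)) holomorphic_on U"
    using hol nz by (intro holomorphic_intros) auto
  have inv: "\<forall>z\<in>U. cmod (inverse (G z)) \<le> 1"
  proof (rule max_le_boundary[OF U hol'])
    fix \<eta> assume "\<eta> \<in> frontier U"
    from tendsto_inverse[OF lim[OF this]]
    show "((\<lambda>z. cmod (inverse (G z))) \<longlongrightarrow> 1) (at \<eta> within U)" by (simp add: norm_inverse)
  qed
  show ?thesis
  proof
    fix z assume z: "z \<in> U"
    have t: "cmod (G z) > 0" using nz z by simp
    have "inverse (cmod (G z)) \<le> 1" using inv z by (simp add: norm_inverse)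
    then have "1 \<le> cmod (G z)" using t by (simp add: inverse_le_1_iff)
    then show "cmod (G z) = 1" using a z by auto
  qed
qed

lemma circ_props:
  assumes "0 < \<rho>"
  shows "circlepath c \<rho> s \<in> sphere c \<rho>"
    and "circlepath c \<rho> s - c = of_real \<rho> * exp (2 * of_real pi * \<i> * of_real s)"
    and "vector_derivative (circlepath c \<rho>) (at s) = 2 * of_real pi * \<i> * (circlepath c \<rho> s - c)"
proof -
  show cp: "circlepath c \<rho> s - c = of_real \<rho> * exp (2 * of_real pi * \<i> * of_real s)"
    by (simp add: circlepath)
  then have "cmod (circlepath c \<rho> s - c) = \<rho>"
    using assms by (simp add: norm_mult norm_exp_eq_Re)
  then show "circlepath c \<rho> s \<in> sphere c \<rho>"
    by (simp add: dist_norm norm_minus_commute)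
  show "vector_derivative (circlepath c \<rho>) (at s) = 2 * of_real pi * \<i> * (circlepath c \<rho> s - c)"
    unfolding vector_derivative_circlepath cp by simp
qed

lemma alg_ident:
  fixes F g z c p :: complex
  assumes "g \<noteq> z" "g \<noteq> c" "p \<noteq> 0"
  shows "(2 * (F / (g - z) * (2 * p * \<i> * (g - c))) - F / (g - c) * (2 * p * \<i> * (g - c))) / (2 * p * \<i>)
    = F * ((g + z - 2 * c) / (g - z))"
proof -
  have a: "g - z \<noteq> 0" "g - c \<noteq> 0" using assms by auto
  define q where "q = 2 * p * \<i>"
  have q: "q \<noteq> 0" using assms(3) by (simp add: q_def)
  have e1: "F / (g - c) * (2 * p * \<i> * (g - c)) = F * q" using a by (simp add: q_def)
  have e2: "(2 * (F / (g - z) * (q * (g - c))) - F * q) / q = 2 * (F / (g - z)) * (g - c) - F"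
    using q a by (simp add: field_simps)
  have e3: "2 * (F / (g - z)) * (g - c) - F = (2 * F * (g - c) - F * (g - z)) / (g - z)"
    using a by (simp add: field_simps)
  have e4: "2 * F * (g - c) - F * (g - z) = F * (g + z - 2 * c)" by (simp add: algebra_simps)
  show ?thesis unfolding e1 using e2 e3 e4 by (simp add: q_def)
qed

lemma schwarz_integral:
  fixes f :: "complex \<Rightarrow> complex"
  assumes \<rho>: "0 < \<rho>" and cont: "continuous_on (sphere c \<rho>) f" and z: "z \<in> ball c \<rho>"
  shows "((\<lambda>s. f (circlepath c \<rho> s) * ((circlepath c \<rho> s + z - 2*c)/(circlepath c \<rho> s - z))) has_integral
     (2 * contour_integral (circlepath c \<rho>) (\<lambda>w. f w/(w - z)) - contour_integral (circlepath c \<rho>) (\<lambda>w. f w/(w - c)))/(2*pi*\<i>)) {0..1}"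
proof -
  let ?g = "circlepath c \<rho>"
  have pi: "path_image ?g = sphere c \<rho>" using \<rho> by simp
  have int1: "(\<lambda>w. f w/(w - z)) contour_integrable_on ?g"
    using z cont \<rho> by (intro contour_integrable_continuous_circlepath) 
      (auto intro!: continuous_intros simp: dist_norm)
  have int0: "(\<lambda>w. f w/(w - c)) contour_integrable_on ?g"
    using z cont \<rho> by (intro contour_integrable_continuous_circlepath) 
      (auto intro!: continuous_intros simp: dist_norm)
  note h1 = has_contour_integral_integral[OF int1, unfolded has_contour_integral]
  note h0 = has_contour_integral_integral[OF int0, unfolded has_contour_integral]
  note h = has_integral_divide[OF has_integral_diff[OF has_integral_mult_right[OF h1, of 2] h0], of "2*pi*\<i>"]
  show ?thesis
  proof (rule has_integral_eq[OF _ h])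
    fix s assume "s \<in> {0..1::real}"
    have ne: "?g s \<noteq> z" "?g s \<noteq> c"
      using circ_props(1)[OF \<rho>, of c s] z \<rho> by (auto simp: dist_commute)
    show "(2 * (f (?g s) / (?g s - z) * vector_derivative ?g (at s)) -
           f (?g s) / (?g s - c) * vector_derivative ?g (at s)) / (2 * pi * \<i>) =
          f (?g s) * ((?g s + z - 2 * c) / (?g s - z))"
      unfolding circ_props(3)[OF \<rho>] using alg_ident[OF ne, of "of_real pi" "f (?g s)"] by simp
  qed
qed

lemma re_ratio: "Re ((A + B) / (A - B)) = ((cmod A)^2 - (cmod B)^2) / (cmod (A - B))^2"
proof -
  have "Re ((A + B) / (A - B)) = (Re (A + B) * Re (A - B) + Im (A + B) * Im (A - B)) / (cmod (A - B))^2"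
    by (rule Re_divide')
  also have "Re (A + B) * Re (A - B) + Im (A + B) * Im (A - B) = (cmod A)^2 - (cmod B)^2"
    unfolding cmod_power2 by (simp add: algebra_simps power2_eq_square)
  finally show ?thesis .
qed

lemma cauchy_hol:
  assumes \<rho>: "0 < \<rho>" and cont: "continuous_on (sphere c \<rho>) f"
  shows "(\<lambda>z. contour_integral (circlepath c \<rho>) (\<lambda>w. f w / (w - z))) holomorphic_on ball c \<rho>"
proof -
  have int: "((\<lambda>u. f u / (u - w)^1) has_contour_integral contour_integral (circlepath c \<rho>) (\<lambda>w'. f w' / (w' - w))) (circlepath c \<rho>)"
    if w: "w \<in> ball c \<rho>" for w
  proof -
    have "(\<lambda>w'. f w' / (w' - w)) contour_integrable_on circlepath c \<rho>"
      using w cont \<rho> by (intro contour_integrable_continuous_circlepath)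
        (auto intro!: continuous_intros simp: dist_norm)
    then show ?thesis using has_contour_integral_integral by simp
  qed
  show ?thesis
    unfolding holomorphic_on_def field_differentiable_def
  proof
    fix w assume w: "w \<in> ball c \<rho>"
    have "continuous_on (path_image (circlepath c \<rho>)) f" using cont \<rho> by simp
    from Cauchy_next_derivative_circlepath(2)[OF this int one_neq_zero w]
    show "\<exists>f'. ((\<lambda>z. contour_integral (circlepath c \<rho>) (\<lambda>w. f w / (w - z))) has_field_derivative f') (at w within ball c \<rho>)"
      by (auto intro: has_field_derivative_at_within)
  qed
qed

definition schwarzS :: "(complex \<Rightarrow> real) \<Rightarrow> complex \<Rightarrow> real \<Rightarrow> complex \<Rightarrow> complex" where
  "schwarzS \<phi> c \<rho> z = (2 * contour_integral (circlepath c \<rho>) (\<lambda>w. of_real (\<phi> w) / (w - z))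
      - contour_integral (circlepath c \<rho>) (\<lambda>w. of_real (\<phi> w) / (w - c))) / (2 * pi * \<i>)"

lemma schwarzS_hol:
  assumes \<rho>: "0 < \<rho>" and cont: "continuous_on (sphere c \<rho>) \<phi>"
  shows "schwarzS \<phi> c \<rho> holomorphic_on ball c \<rho>"
proof -
  have "continuous_on (sphere c \<rho>) (\<lambda>w. complex_of_real (\<phi> w))"
    using cont by (intro continuous_intros)
  from cauchy_hol[OF \<rho> this] show ?thesis
    unfolding schwarzS_def[abs_def] by (intro holomorphic_intros) auto
qed

definition poissonP :: "complex \<Rightarrow> real \<Rightarrow> complex \<Rightarrow> real \<Rightarrow> real" where
  "poissonP c \<rho> z s = (\<rho>^2 - (cmod (z - c))^2) / (cmod (circlepath c \<rho> s - z))^2"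

lemma re_kernel:
  assumes "0 < \<rho>"
  shows "Re ((circlepath c \<rho> s + z - 2 * c) / (circlepath c \<rho> s - z)) = poissonP c \<rho> z s"
proof -
  have n: "cmod (circlepath c \<rho> s - c) = \<rho>" using circ_props(1)[OF assms, of c s] by (simp add: dist_norm norm_minus_commute)
  have eq: "(circlepath c \<rho> s + z - 2 * c) / (circlepath c \<rho> s - z) =
        ((circlepath c \<rho> s - c) + (z - c)) / ((circlepath c \<rho> s - c) - (z - c))"
    by (simp add: algebra_simps)
  have "Re ((circlepath c \<rho> s + z - 2 * c) / (circlepath c \<rho> s - z)) =
     ((cmod (circlepath c \<rho> s - c))^2 - (cmod (z - c))^2) / (cmod ((circlepath c \<rho> s - c) - (z - c)))^2"
    unfolding eq by (rule re_ratio)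
  then show ?thesis unfolding poissonP_def using n by simp
qed

lemma re_ofreal_mult: "Re (complex_of_real a * w) = a * Re w" by simp

lemma poisson_real:
  assumes \<rho>: "0 < \<rho>" and cont: "continuous_on (sphere c \<rho>) \<phi>" and z: "z \<in> ball c \<rho>"
  shows "((\<lambda>s. \<phi> (circlepath c \<rho> s) * poissonP c \<rho> z s) has_integral Re (schwarzS \<phi> c \<rho> z)) {0..1}"
proof -
  have "continuous_on (sphere c \<rho>) (\<lambda>w. complex_of_real (\<phi> w))"
    using cont by (intro continuous_intros)
  note h = has_integral_Re[OF schwarz_integral[OF \<rho> this z], folded schwarzS_def]
  show ?thesis
    by (rule has_integral_eq[OF _ h]) (simp only: re_ofreal_mult re_kernel[OF \<rho>])
qed

lemma poisson_one:
  assumes \<rho>: "0 < \<rho>" and z: "z \<in> ball c \<rho>"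
  shows "((\<lambda>s. poissonP c \<rho> z s) has_integral 1) {0..1}"
proof -
  have c1: "contour_integral (circlepath c \<rho>) (\<lambda>w. 1 / (w - z)) = 2 * of_real pi * \<i>"
    using Cauchy_integral_circlepath_simple[of "\<lambda>_. 1" c \<rho> z] z
    by (auto intro!: contour_integral_unique simp: dist_norm norm_minus_commute)
  have c0: "contour_integral (circlepath c \<rho>) (\<lambda>w. 1 / (w - c)) = 2 * of_real pi * \<i>"
    using Cauchy_integral_circlepath_simple[of "\<lambda>_. 1" c \<rho> c] \<rho>
    by (auto intro!: contour_integral_unique)
  have "continuous_on (sphere c \<rho>) (\<lambda>w. 1::complex)" by simp
  from has_integral_Re[OF schwarz_integral[OF \<rho> this z]]
  show ?thesis by (simp add: re_kernel[OF \<rho>] c1 c0)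
qed

lemma poisson_boundary:
  assumes \<rho>: "0 < \<rho>" and cont: "continuous_on (sphere c \<rho>) \<phi>" and \<eta>: "\<eta> \<in> sphere c \<rho>"
  shows "((\<lambda>z. Re (schwarzS \<phi> c \<rho> z)) \<longlongrightarrow> \<phi> \<eta>) (at \<eta> within ball c \<rho>)"
proof -
  obtain M0 where M0: "\<forall>x\<in>\<phi> ` sphere c \<rho>. norm x \<le> M0"
    using compact_imp_bounded[OF compact_continuous_image[OF cont compact_sphere]] bounded_iff by blast
  define M where "M = max M0 0"
  have M: "\<And>w. w \<in> sphere c \<rho> \<Longrightarrow> \<bar>\<phi> w\<bar> \<le> M" "M \<ge> 0"
  proof -
    fix w assume "w \<in> sphere c \<rho>"
    then have "\<bar>\<phi> w\<bar> \<le> M0" using M0 by (metis image_eqI real_norm_def)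
    then show "\<bar>\<phi> w\<bar> \<le> M" by (simp add: M_def)
  qed (simp add: M_def)
  show ?thesis
    unfolding Lim_within
  proof (intro allI impI)
    fix \<epsilon> :: real assume \<epsilon>: "\<epsilon> > 0"
    obtain \<delta>1 where \<delta>1: "\<delta>1 > 0" "\<forall>w\<in>sphere c \<rho>. dist w \<eta> < \<delta>1 \<longrightarrow> dist (\<phi> w) (\<phi> \<eta>) < \<epsilon>/2"
      using cont \<eta> \<epsilon> unfolding continuous_on_iff by (meson half_gt_zero)
    define K where "K = 32 * M * \<rho> + 1"
    have K: "K > 0"
    proof -
      have "0 \<le> 32 * M * \<rho>" using M(2) \<rho> by simp
      then show ?thesis by (simp add: K_def)
    qed
    define d where "d = min (\<delta>1/2) (\<epsilon> * \<delta>1^2 / K)"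
    have d: "d > 0" using \<delta>1 \<epsilon> K by (simp add: d_def)
    show "\<exists>d>0. \<forall>z\<in>ball c \<rho>. 0 < dist z \<eta> \<and> dist z \<eta> < d \<longrightarrow> dist (Re (schwarzS \<phi> c \<rho> z)) (\<phi> \<eta>) < \<epsilon>"
    proof (intro exI conjI ballI impI)
      show "d > 0" by (rule d)
      fix z assume z: "z \<in> ball c \<rho>" and dz: "0 < dist z \<eta> \<and> dist z \<eta> < d"
      define t where "t = dist z \<eta>"
      have t: "t < \<delta>1/2" "t < \<epsilon> * \<delta>1^2 / K" "0 \<le> t" using dz by (auto simp: t_def d_def)
      define P where "P = poissonP c \<rho> z"
      let ?g = "circlepath c \<rho>"
      have IP: "((\<lambda>s. \<phi> (?g s) * P s) has_integral Re (schwarzS \<phi> c \<rho> z)) {0..1}"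
        unfolding P_def by (rule poisson_real[OF \<rho> cont z])
      have I1: "(P has_integral 1) {0..1}" unfolding P_def by (rule poisson_one[OF \<rho> z])
      have ID: "((\<lambda>s. (\<phi> (?g s) - \<phi> \<eta>) * P s) has_integral (Re (schwarzS \<phi> c \<rho> z) - \<phi> \<eta>)) {0..1}"
        using has_integral_diff[OF IP has_integral_mult_right[OF I1, of "\<phi> \<eta>"]]
        by (simp add: algebra_simps)
      define C where "C = 16 * M * \<rho> * t / \<delta>1^2"
      have IB: "((\<lambda>s. \<epsilon>/2 * P s + C) has_integral (\<epsilon>/2 + C)) {0..1}"
        using has_integral_add[OF has_integral_mult_right[OF I1, of "\<epsilon>/2"] has_integral_const_real[of C 0 1]]
        by simp
      have zc: "cmod (z - c) < \<rho>" using z by (simp add: dist_norm norm_minus_commute)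
      have bnd: "\<bar>(\<phi> (?g s) - \<phi> \<eta>) * P s\<bar> \<le> \<epsilon>/2 * P s + C" if s: "s \<in> {0..1}" for s
      proof -
        define w where "w = ?g s"
        have w: "w \<in> sphere c \<rho>" unfolding w_def by (rule circ_props(1)[OF \<rho>])
        have Pnn: "P s \<ge> 0"
          unfolding P_def poissonP_def using zc by (intro divide_nonneg_nonneg) (auto simp: abs_le_square_iff power_mono)
        have C0: "C \<ge> 0" unfolding C_def using M(2) \<rho> t by simp
        show ?thesis
        proof (cases "dist w \<eta> < \<delta>1")
          case True
          then have "\<bar>\<phi> w - \<phi> \<eta>\<bar> \<le> \<epsilon>/2" using \<delta>1(2) w by (auto simp: dist_real_def less_imp_le)
          then have "\<bar>\<phi> w - \<phi> \<eta>\<bar> * P s \<le> \<epsilon>/2 * P s"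
            using Pnn by (rule mult_right_mono)
          then have "\<bar>(\<phi> w - \<phi> \<eta>) * P s\<bar> \<le> \<epsilon>/2 * P s"
            using Pnn by (simp add: abs_mult)
          then show ?thesis using C0 by (simp add: w_def)
        next
          case False
          have "dist w z \<ge> dist w \<eta> - dist z \<eta>" using dist_triangle[of w \<eta> z] by (simp add: dist_commute)
          then have wz: "cmod (w - z) \<ge> \<delta>1/2" using False t by (simp add: dist_norm t_def)
          have num: "\<rho>^2 - (cmod (z - c))^2 \<le> t * (2 * \<rho>)"
          proof -
            have "\<rho> - cmod (z - c) \<le> t"
              using w norm_triangle_ineq2[of "\<eta> - c" "z - c"] \<eta>
              by (simp add: t_def dist_norm norm_minus_commute)
            moreover have "\<rho> + cmod (z - c) \<le> 2 * \<rho>" using zc by simp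
            moreover have "\<rho>^2 - (cmod (z - c))^2 = (\<rho> - cmod (z - c)) * (\<rho> + cmod (z - c))"
              by (simp add: power2_eq_square algebra_simps)
            ultimately show ?thesis using zc t \<rho>
              by (metis mult_mono add_nonneg_nonneg norm_ge_zero less_imp_le)
          qed
          have "P s = (\<rho>^2 - (cmod (z - c))^2) / (cmod (w - z))^2"
            by (simp add: P_def poissonP_def w_def)
          also have "\<dots> \<le> (\<rho>^2 - (cmod (z - c))^2) / (\<delta>1/2)^2"
            using wz zc \<delta>1 by (intro divide_left_mono power_mono) (auto intro!: mult_pos_pos power_mono)
          also have "\<dots> \<le> (t * (2 * \<rho>)) / (\<delta>1/2)^2"
            using num \<delta>1 by (intro divide_right_mono) auto
          finally have Pb: "P s \<le> 8 * \<rho> * t / \<delta>1^2" by (simp add: power_divide mult.commute mult.left_commute)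
          have pb: "\<bar>\<phi> w - \<phi> \<eta>\<bar> \<le> 2 * M" using M(1)[OF w] M(1)[OF \<eta>] by linarith
          have "\<bar>(\<phi> w - \<phi> \<eta>) * P s\<bar> = \<bar>\<phi> w - \<phi> \<eta>\<bar> * P s" using Pnn by (simp add: abs_mult)
          also have "\<dots> \<le> (2 * M) * (8 * \<rho> * t / \<delta>1^2)"
            using pb Pb Pnn M(2) by (intro mult_mono) auto
          also have "\<dots> = C" by (simp add: C_def)
          finally have "\<bar>(\<phi> w - \<phi> \<eta>) * P s\<bar> \<le> C" .
          moreover have "0 \<le> \<epsilon>/2 * P s" using Pnn \<epsilon> by simp
          ultimately show ?thesis unfolding w_def by linarith
        qed
      qed
      have le1: "Re (schwarzS \<phi> c \<rho> z) - \<phi> \<eta> \<le> \<epsilon>/2 + C"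
        by (rule has_integral_le[OF ID IB]) (rule order_trans[OF abs_ge_self bnd])
      have le2: "-(Re (schwarzS \<phi> c \<rho> z) - \<phi> \<eta>) \<le> \<epsilon>/2 + C"
        by (rule has_integral_le[OF has_integral_neg[OF ID] IB]) (rule order_trans[OF abs_ge_minus_self bnd])
      have "C < \<epsilon>/2"
      proof -
        have "C * K = 16 * M * \<rho> * t * K / \<delta>1^2" by (simp add: C_def)
        have "16 * M * \<rho> * t \<le> (K / 2) * t" unfolding K_def using t(3) by (simp add: field_simps)
        moreover have "t * K < \<epsilon> * \<delta>1^2" using t(2) K by (simp add: pos_less_divide_eq)
        ultimately have "16 * M * \<rho> * t < \<epsilon>/2 * \<delta>1^2" by (simp add: mult.commute)
        then show ?thesis using \<delta>1 by (simp add: C_def pos_divide_less_eq)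
      qed
      then show "dist (Re (schwarzS \<phi> c \<rho> z)) (\<phi> \<eta>) < \<epsilon>"
        using le1 le2 by (simp add: dist_real_def abs_if)
    qed
  qed
qed

definition cinv :: "complex \<Rightarrow> complex" where "cinv z = 1 / cnj z"

lemma cinv_inv: "cinv (cinv z) = z" by (simp add: cinv_def)
lemma norm_inv: "cmod (cinv z) = 1 / cmod z" by (simp add: cinv_def norm_divide)
lemma cinv_unit:
  assumes "cmod z = 1" shows "cinv z = z"
proof -
  have zc: "z * cnj z = 1" using complex_norm_square[of z] assms by simp
  have "cnj z \<noteq> 0" using assms by auto
  then show ?thesis using zc by (simp add: cinv_def divide_eq_eq mult.commute)
qed

lemma cinv_dist:
  assumes "z \<noteq> 0" "(cmod c)^2 = 1 + \<rho>^2"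
  shows "(cmod (cinv z - c))^2 - \<rho>^2 = ((cmod (z - c))^2 - \<rho>^2) / (cmod z)^2"
proof -
  obtain x y where z: "z = Complex x y" by (cases z)
  obtain a d where c: "c = Complex a d" by (cases c)
  define s where "s = x^2 + y^2"
  have sz: "(cmod z)^2 = s" by (simp add: z s_def cmod_power2)
  have n: "s \<noteq> 0" using assms(1) sz by auto
  have cc: "a^2 + d^2 = 1 + \<rho>^2" using assms(2) c by (simp add: cmod_power2)
  have iz: "cinv z = Complex (x / s) (y / s)"
    using z by (simp add: cinv_def complex_eq_iff Re_divide Im_divide s_def)
  have e1: "(cmod (cinv z - c))^2 = (x/s - a)^2 + (y/s - d)^2" by (simp add: iz c cmod_power2)
  have e2: "(x/s - a)^2 + (y/s - d)^2 = (x^2 + y^2)/s^2 - 2*(a*x+d*y)/s + (a^2 + d^2)"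
    using n by (simp add: power2_eq_square field_simps)
  have e3: "(cmod (z - c))^2 = s - 2*(a*x+d*y) + (a^2 + d^2)"
    unfolding cmod_power2 by (simp add: z c s_def power2_eq_square algebra_simps)
  have e4: "(x^2 + y^2)/s^2 = 1/s" using n by (simp add: s_def power2_eq_square)
  show ?thesis unfolding e1 e2 e3 e4 sz cc using n
    by (simp add: field_simps)
qed

definition Lf :: "(complex \<Rightarrow> complex) \<Rightarrow> complex \<Rightarrow> real" where
  "Lf b w = (if cmod w < 1 then - ln (cmod (b w)) else 0)"

definition phi :: "(complex \<Rightarrow> complex) \<Rightarrow> complex \<Rightarrow> real" where
  "phi b w = Lf b w - Lf b (cinv w)"

lemma phi_inv: "phi b (cinv w) = - phi b w"
  by (simp add: phi_def cinv_inv)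

lemma ball_un: "ball 0 1 \<union> - ball (0::complex) 1 = UNIV" by auto

lemma Lf_cont:
  assumes hol: "b holomorphic_on ball 0 1" and le1: "\<forall>z\<in>ball 0 1. cmod (b z) \<le> 1"
    and half: "\<forall>y\<in>ball 0 1. dist y \<xi> < R0 \<longrightarrow> cmod (b y) > 1/2"
    and nsp: "\<forall>y. cmod y = 1 \<longrightarrow> dist y \<xi> < R0 \<longrightarrow> y \<notin> spec b"
    and w: "dist w \<xi> < R0"
  shows "isCont (Lf b) w"
proof -
  consider "cmod w < 1" | "cmod w > 1" | "cmod w = 1" by linarith
  then show ?thesis
  proof cases
    case 1
    have wb: "w \<in> ball 0 1" using 1 by simp
    have icb: "isCont b w"
      using holomorphic_on_imp_continuous_on[OF hol] wb continuous_on_interior by fastforce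
    have bw: "cmod (b w) > 1/2" using half wb w by auto
    have "((\<lambda>y. - ln (cmod (b y))) \<longlongrightarrow> - ln (cmod (b w))) (at w)"
      using bw by (intro tendsto_intros isCont_tendsto_compose[OF icb]) auto
    then have ic: "isCont (\<lambda>y. - ln (cmod (b y))) w" by (simp add: isCont_def)
    have ev: "eventually (\<lambda>y. - ln (cmod (b y)) = Lf b y) (nhds w)"
      using 1 by (intro eventually_nhds_in_open[THEN eventually_mono, of "ball 0 1"]) (auto simp: Lf_def)
    show ?thesis using isCont_cong[OF ev] ic by blast
  next
    case 2
    have "eventually (\<lambda>y. (0::real) = Lf b y) (nhds w)"
      using 2 by (intro eventually_nhds_in_open[THEN eventually_mono, of "-cball 0 1"]) (auto simp: Lf_def)
    then show ?thesis using isCont_cong[of "\<lambda>_. 0::real" "Lf b" w] by simp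
  next
    case 3
    have ns: "w \<notin> spec b" using nsp w 3 by auto
    have ws: "w \<in> sphere 0 1" using 3 by simp
    have l1: "((\<lambda>z. cmod (b z)) \<longlongrightarrow> 1) (at w within ball 0 1)"
      by (rule lim_abs_one[OF ns ws le1])
    have "((\<lambda>z. - ln (cmod (b z))) \<longlongrightarrow> - ln 1) (at w within ball 0 1)"
      by (intro tendsto_intros l1) simp
    then have "((\<lambda>z. - ln (cmod (b z))) \<longlongrightarrow> 0) (at w within ball 0 1)" by simp
    then have a1: "(Lf b \<longlongrightarrow> 0) (at w within ball 0 1)"
      by (rule Lim_transform_eventually) (auto simp: Lf_def eventually_at_filter)
    have a2: "(Lf b \<longlongrightarrow> 0) (at w within - ball 0 1)"
      by (rule Lim_transform_eventually[OF tendsto_const]) (auto simp: Lf_def eventually_at_filter)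
    have "(Lf b \<longlongrightarrow> 0) (at w within (ball 0 1 \<union> - ball 0 1))"
      by (rule Lim_within_Un[THEN iffD2]) (use a1 a2 in blast)
    then have "(Lf b \<longlongrightarrow> 0) (at w)" by (simp only: ball_un)
    moreover have "Lf b w = 0" using 3 by (simp add: Lf_def)
    ultimately show ?thesis by (simp add: isCont_def)
  qed
qed

definition cc :: "complex \<Rightarrow> real \<Rightarrow> complex" where
  "cc \<xi> \<rho> = complex_of_real (sqrt (1 + \<rho>^2)) * \<xi>"

lemma cc_props:
  assumes \<xi>: "cmod \<xi> = 1" and \<rho>: "\<rho> > 0"
  shows "(cmod (cc \<xi> \<rho>))^2 = 1 + \<rho>^2" and "cmod (cc \<xi> \<rho>) > \<rho>"
    and "dist (cc \<xi> \<rho>) \<xi> < \<rho>"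
proof -
  have k: "sqrt (1 + \<rho>^2) \<ge> 0" by simp
  have nc: "cmod (cc \<xi> \<rho>) = sqrt (1 + \<rho>^2)" using \<xi> by (simp add: cc_def norm_mult)
  then show "(cmod (cc \<xi> \<rho>))^2 = 1 + \<rho>^2" by simp
  have "\<rho> < sqrt (1 + \<rho>^2)" using \<rho> by (simp add: real_less_rsqrt)
  then show "cmod (cc \<xi> \<rho>) > \<rho>" using nc by simp
  have "cc \<xi> \<rho> - \<xi> = complex_of_real (sqrt (1 + \<rho>^2) - 1) * \<xi>" by (simp add: cc_def algebra_simps)
  then have "dist (cc \<xi> \<rho>) \<xi> = \<bar>sqrt (1 + \<rho>^2) - 1\<bar>" using \<xi> by (simp add: dist_norm norm_mult del: of_real_diff)
  also have "\<dots> < \<rho>"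
  proof -
    have "1 \<le> sqrt (1 + \<rho>^2)" by simp
    moreover have "sqrt (1 + \<rho>^2) < 1 + \<rho>"
    proof -
      have "1 + \<rho>^2 < (1 + \<rho>)^2" using \<rho> by (simp add: power2_eq_square algebra_simps)
      then have "sqrt (1 + \<rho>^2) < sqrt ((1 + \<rho>)^2)" by (rule real_sqrt_less_mono)
      then show ?thesis using \<rho> by simp
    qed
    ultimately show ?thesis by simp
  qed
  finally show "dist (cc \<xi> \<rho>) \<xi> < \<rho>" .
qed

lemma refl_core:
  assumes hol: "b holomorphic_on ball 0 1" and le1: "\<forall>z\<in>ball 0 1. cmod (b z) \<le> 1"
    and \<xi>: "cmod \<xi> = 1"
    and half: "\<forall>y\<in>ball 0 1. dist y \<xi> < R0 \<longrightarrow> cmod (b y) > 1/2"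
    and nsp: "\<forall>y. cmod y = 1 \<longrightarrow> dist y \<xi> < R0 \<longrightarrow> y \<notin> spec b"
    and \<rho>: "\<rho> > 0" "3 * \<rho> \<le> R0"
  shows "schwarzS (phi b) (cc \<xi> \<rho>) \<rho> holomorphic_on ball (cc \<xi> \<rho>) \<rho> \<and>
    (\<exists>k. \<forall>z \<in> ball (cc \<xi> \<rho>) \<rho> \<inter> ball 0 1. exp (schwarzS (phi b) (cc \<xi> \<rho>) \<rho> z) * b z = k)"
proof -
  define c where "c = cc \<xi> \<rho>"
  define S where "S = schwarzS (phi b) c \<rho>"
  have c2: "(cmod c)^2 = 1 + \<rho>^2" and cr: "cmod c > \<rho>" and cxi: "dist c \<xi> < \<rho>"
    using cc_props[OF \<xi> \<rho>(1)] by (auto simp: c_def)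
  have F1: "dist y \<xi> < R0" if "y \<in> cball c \<rho>" for y
    using that dist_triangle[of y \<xi> c] cxi \<rho> by (simp add: dist_commute)
  have F2: "y \<noteq> 0" if "y \<in> cball c \<rho>" for y
    using that cr by (auto simp: dist_norm)
  have cinv_sign: "(cmod (cinv y - c))^2 - \<rho>^2 = ((cmod (y - c))^2 - \<rho>^2) / (cmod y)^2"
    if "y \<in> cball c \<rho>" for y
    by (rule cinv_dist[OF F2[OF that] c2])
  have F3s: "cinv y \<in> sphere c \<rho>" if y: "y \<in> sphere c \<rho>" for y
  proof -
    have "cmod (y - c) = \<rho>" using y by (simp add: dist_norm norm_minus_commute)
    then have "(cmod (cinv y - c))^2 = \<rho>^2" using cinv_sign[of y] y by simp
    then have "cmod (cinv y - c) = \<rho>" using \<rho> by (simp add: power2_eq_iff_nonneg)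
    then show ?thesis by (simp add: dist_norm norm_minus_commute)
  qed
  have F3b: "cinv y \<in> ball c \<rho>" if y: "y \<in> ball c \<rho>" for y
  proof -
    have yn: "cmod y > 0" using F2[of y] y by auto
    have "cmod (y - c) < \<rho>" using y by (simp add: dist_norm norm_minus_commute)
    then have "(cmod (y - c))^2 < \<rho>^2" using \<rho> by (simp add: power_strict_mono)
    then have "((cmod (y - c))^2 - \<rho>^2) / (cmod y)^2 < 0" using yn by (simp add: divide_neg_pos)
    then have "(cmod (cinv y - c))^2 < \<rho>^2" using cinv_sign[of y] y by simp
    then have "cmod (cinv y - c) < \<rho>" using \<rho> by (smt (verit) power_mono norm_ge_zero)
    then show ?thesis by (simp add: dist_norm norm_minus_commute)
  qed
  have Lc: "isCont (Lf b) y" if "y \<in> cball c \<rho>" for y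
    by (rule Lf_cont[OF hol le1 half nsp F1[OF that]])
  have F4: "continuous_on (sphere c \<rho>) (phi b)"
  proof -
    have c1: "continuous_on (sphere c \<rho>) (Lf b)"
      using Lc by (intro continuous_at_imp_continuous_on) auto
    have ci: "continuous_on (sphere c \<rho>) cinv"
      unfolding cinv_def using F2 by (intro continuous_intros) auto
    have c2: "continuous_on (sphere c \<rho>) (\<lambda>w. Lf b (cinv w))"
      by (rule continuous_on_compose2[OF c1 ci]) (use F3s in auto)
    show ?thesis unfolding phi_def[abs_def] using c1 c2 by (intro continuous_intros)
  qed
  have holS: "S holomorphic_on ball c \<rho>" unfolding S_def by (rule schwarzS_hol[OF \<rho>(1) F4])
  have bdS: "((\<lambda>z. Re (S z)) \<longlongrightarrow> phi b \<eta>) (at \<eta> within ball c \<rho>)" if "\<eta> \<in> sphere c \<rho>" for \<eta>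
    unfolding S_def by (rule poisson_boundary[OF \<rho>(1) F4 that])
  define St where "St = (\<lambda>z. - cnj (S (cinv z)))"
  have holSt: "St holomorphic_on ball c \<rho>"
  proof -
    have cb: "cnj ` ball c \<rho> = ball (cnj c) \<rho>"
    proof
      show "cnj ` ball c \<rho> \<subseteq> ball (cnj c) \<rho>"
        by (auto simp: dist_norm complex_cnj_diff[symmetric] simp del: complex_cnj_diff)
      show "ball (cnj c) \<rho> \<subseteq> cnj ` ball c \<rho>"
      proof
        fix x assume "x \<in> ball (cnj c) \<rho>"
        then have "cnj x \<in> ball c \<rho>"
          by (simp add: dist_norm) (metis complex_cnj_cnj complex_cnj_diff complex_mod_cnj)
        then show "x \<in> cnj ` ball c \<rho>" by (metis complex_cnj_cnj image_eqI)
      qed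
    qed
    have h1: "(cnj \<circ> S \<circ> cnj) holomorphic_on ball (cnj c) \<rho>"
    proof (rule holomorphic_on_compose_cnj_cnj)
      have "cnj ` ball (cnj c) \<rho> = ball c \<rho>" unfolding cb[symmetric] by (simp add: image_image)
      then show "S holomorphic_on cnj ` ball (cnj c) \<rho>" using holS by simp
    qed simp
    have h2: "(\<lambda>z. 1 / z) holomorphic_on ball c \<rho>"
      using F2 by (intro holomorphic_intros) auto
    have h3: "(\<lambda>z. 1 / z) ` ball c \<rho> \<subseteq> ball (cnj c) \<rho>"
    proof
      fix x assume "x \<in> (\<lambda>z. 1 / z) ` ball c \<rho>"
      then obtain z where z: "z \<in> ball c \<rho>" "x = 1 / z" by blast
      have "cinv z \<in> ball c \<rho>" by (rule F3b[OF z(1)])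
      then have "cnj x \<in> ball c \<rho>" using z(2) by (simp add: cinv_def)
      then show "x \<in> ball (cnj c) \<rho>" using cb by (metis complex_cnj_cnj imageI)
    qed
    have "((cnj \<circ> S \<circ> cnj) \<circ> (\<lambda>z. 1 / z)) holomorphic_on ball c \<rho>"
      by (rule holomorphic_on_compose_gen[OF h2 h1 h3])
    then have "(\<lambda>z. - ((cnj \<circ> S \<circ> cnj) \<circ> (\<lambda>z. 1 / z)) z) holomorphic_on ball c \<rho>"
      by (intro holomorphic_intros)
    moreover have "(\<lambda>z. - ((cnj \<circ> S \<circ> cnj) \<circ> (\<lambda>z. 1 / z)) z) = St"
      by (auto simp: St_def cinv_def)
    ultimately show ?thesis by simp
  qed
  have bdSt: "((\<lambda>z. Re (St z)) \<longlongrightarrow> phi b \<eta>) (at \<eta> within ball c \<rho>)" if \<eta>: "\<eta> \<in> sphere c \<rho>" for \<eta>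
  proof -
    have \<eta>i: "cinv \<eta> \<in> sphere c \<rho>" by (rule F3s[OF \<eta>])
    have icinv: "isCont cinv \<eta>" unfolding cinv_def using F2[of \<eta>] \<eta> by (intro continuous_intros) auto
    have fl: "filterlim cinv (at (cinv \<eta>) within ball c \<rho>) (at \<eta> within ball c \<rho>)"
    proof (rule filterlim_at_withinI)
      show "filterlim cinv (nhds (cinv \<eta>)) (at \<eta> within ball c \<rho>)"
        using continuous_at_imp_continuous_within[OF icinv] by (simp add: continuous_within)
      show "eventually (\<lambda>z. cinv z \<in> ball c \<rho> - {cinv \<eta>}) (at \<eta> within ball c \<rho>)"
        unfolding eventually_at_filter
      proof (intro always_eventually allI impI)
        fix z assume z: "z \<noteq> \<eta>" "z \<in> ball c \<rho>"
        have "cinv z \<noteq> cinv \<eta>"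
        proof
          assume "cinv z = cinv \<eta>"
          then have "cinv (cinv z) = cinv (cinv \<eta>)" by simp
          then show False using z(1) by (simp add: cinv_inv)
        qed
        then show "cinv z \<in> ball c \<rho> - {cinv \<eta>}" using F3b[OF z(2)] by simp
      qed
    qed
    have "((\<lambda>z. Re (S (cinv z))) \<longlongrightarrow> phi b (cinv \<eta>)) (at \<eta> within ball c \<rho>)"
      using filterlim_compose[OF bdS[OF \<eta>i] fl] by simp
    then have "((\<lambda>z. - Re (S (cinv z))) \<longlongrightarrow> - phi b (cinv \<eta>)) (at \<eta> within ball c \<rho>)"
      by (rule tendsto_minus)
    then show ?thesis by (simp add: St_def phi_inv)
  qed
  have ReEq: "Re (S z) = Re (St z)" if z: "z \<in> ball c \<rho>" for z
  proof -
    define G where "G = (\<lambda>z. exp (S z - St z))"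
    have "\<forall>z\<in>ball c \<rho>. cmod (G z) = 1"
    proof (rule max_boundary)
      show "ball c \<rho> \<noteq> {}" using \<rho> by simp
      show "G holomorphic_on ball c \<rho>" unfolding G_def using holS holSt by (intro holomorphic_intros)
      show "\<forall>z\<in>ball c \<rho>. G z \<noteq> 0" by (simp add: G_def)
      fix \<eta> assume "\<eta> \<in> frontier (ball c \<rho>)"
      then have \<eta>: "\<eta> \<in> sphere c \<rho>" using \<rho> by simp
      have "((\<lambda>z. exp (Re (S z) - Re (St z))) \<longlongrightarrow> exp (phi b \<eta> - phi b \<eta>)) (at \<eta> within ball c \<rho>)"
        by (intro tendsto_intros bdS bdSt \<eta>)
      then show "((\<lambda>z. cmod (G z)) \<longlongrightarrow> 1) (at \<eta> within ball c \<rho>)"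
        by (simp add: G_def norm_exp_eq_Re)
    qed auto
    then have "exp (Re (S z) - Re (St z)) = 1" using z by (simp add: G_def norm_exp_eq_Re)
    then show ?thesis by simp
  qed
  have Re0: "Re (S z) = 0" if z: "z \<in> ball c \<rho>" "cmod z = 1" for z
  proof -
    have "Re (St z) = - Re (S z)" using cinv_unit[OF z(2)] by (simp add: St_def)
    then show ?thesis using ReEq[OF z(1)] by simp
  qed
  define U where "U = ball c \<rho> \<inter> ball 0 1"
  define \<Psi> where "\<Psi> = (\<lambda>z. exp (S z) * b z)"
  have Usub: "U \<subseteq> ball c \<rho>" "U \<subseteq> ball 0 1" by (auto simp: U_def)
  have bpos: "cmod (b z) > 1/2" if "z \<in> U" for z
    using half F1[of z] that by (auto simp: U_def)
  have Une: "U \<noteq> {}"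
  proof -
    define e0 where "e0 = \<rho> - dist c \<xi>"
    have e0: "e0 > 0" using cxi by (simp add: e0_def)
    define s where "s = min (e0/2) (1/2)"
    have s: "0 < s" "s < e0" "s \<le> 1/2" using e0 by (auto simp: s_def)
    define p where "p = complex_of_real (1 - s) * \<xi>"
    have "\<xi> - p = complex_of_real s * \<xi>" by (simp add: p_def algebra_simps)
    then have dp: "dist \<xi> p = s" using s \<xi> by (simp add: dist_norm norm_mult)
    have np: "cmod p = 1 - s" using s \<xi> by (simp add: p_def norm_mult del: of_real_diff)
    have "dist c p \<le> dist c \<xi> + dist \<xi> p" by (rule dist_triangle)
    then have "dist c p < \<rho>" using dp s by (simp add: e0_def)
    then have "p \<in> U" using np s by (simp add: U_def)
    then show ?thesis by blast
  qed
  have openU: "open U" by (simp add: U_def open_Int)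
  have closU: "closure U \<subseteq> cball c \<rho> \<inter> cball 0 1"
  proof -
    have a: "closure U \<subseteq> cball c \<rho>" using closure_mono[OF Usub(1)] \<rho> by simp
    have b: "closure U \<subseteq> cball 0 1" using closure_mono[OF Usub(2)] by simp
    from a b show ?thesis by blast
  qed
  have normPsi: "cmod (\<Psi> z) = exp (Re (S z)) * cmod (b z)" for z
    by (simp add: \<Psi>_def norm_mult norm_exp_eq_Re)
  have icb: "isCont b z" if "z \<in> ball 0 1" for z
    using holomorphic_on_imp_continuous_on[OF hol] that continuous_on_interior by fastforce
  have holPsi: "\<Psi> holomorphic_on U"
  proof -
    have "S holomorphic_on U" using holS Usub(1) by (rule holomorphic_on_subset)
    moreover have "b holomorphic_on U" using hol Usub(2) by (rule holomorphic_on_subset)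
    ultimately show "\<Psi> holomorphic_on U" unfolding \<Psi>_def by (intro holomorphic_intros)
  qed
  have connU: "connected U" unfolding U_def by (intro convex_connected convex_Int convex_ball)
  have Psi1: "\<forall>z\<in>U. cmod (\<Psi> z) = 1"
  proof (rule max_boundary[OF openU])
    show "connected U" by (rule connU)
    show "bounded U" unfolding U_def by (simp add: bounded_Int)
    show "U \<noteq> {}" by (rule Une)
    show "\<Psi> holomorphic_on U" by (rule holPsi)
    show "\<forall>z\<in>U. \<Psi> z \<noteq> 0" using bpos by (fastforce simp: \<Psi>_def)
    fix \<eta> assume \<eta>f: "\<eta> \<in> frontier U"
    have \<eta>c: "\<eta> \<in> closure U" and \<eta>U: "\<eta> \<notin> U"
      using \<eta>f openU by (auto simp: frontier_def interior_open)
    have \<eta>cb: "\<eta> \<in> cball c \<rho>" "cmod \<eta> \<le> 1" using closU \<eta>c by auto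
    have lim1: "((\<lambda>z. cmod (b z)) \<longlongrightarrow> 1) (at \<eta> within U)" if "cmod \<eta> = 1"
    proof -
      have "\<eta> \<notin> spec b" using nsp F1[OF \<eta>cb(1)] that by auto
      from lim_abs_one[OF this _ le1] that
      have "((\<lambda>z. cmod (b z)) \<longlongrightarrow> 1) (at \<eta> within ball 0 1)" by simp
      then show ?thesis by (rule tendsto_within_subset) (rule Usub)
    qed
    have goal: "((\<lambda>z. exp (Re (S z)) * cmod (b z)) \<longlongrightarrow> 1) (at \<eta> within U)"
    proof (cases "\<eta> \<in> sphere c \<rho>")
      case True
      have hS: "((\<lambda>z. Re (S z)) \<longlongrightarrow> phi b \<eta>) (at \<eta> within U)"
        using bdS[OF True] Usub(1) by (rule tendsto_within_subset)
      show ?thesis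
      proof (cases "cmod \<eta> < 1")
        case lt: True
        have \<eta>b: "\<eta> \<in> ball 0 1" using lt by simp
        have bp: "cmod (b \<eta>) > 1/2" using half F1[OF \<eta>cb(1)] \<eta>b by auto
        have "cmod (cinv \<eta>) > 1"
          using lt F2[OF \<eta>cb(1)] by (simp add: norm_inv)
        then have ph: "phi b \<eta> = - ln (cmod (b \<eta>))" using lt by (simp add: phi_def Lf_def)
        have hb: "((\<lambda>z. cmod (b z)) \<longlongrightarrow> cmod (b \<eta>)) (at \<eta> within U)"
        proof -
          have "isCont (\<lambda>z. cmod (b z)) \<eta>" using icb[OF \<eta>b] by (rule isCont_norm)
          then have "((\<lambda>z. cmod (b z)) \<longlongrightarrow> cmod (b \<eta>)) (at \<eta>)" by (simp add: isCont_def)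
          then show ?thesis by (rule tendsto_within_subset) simp
        qed
        have "((\<lambda>z. exp (Re (S z)) * cmod (b z)) \<longlongrightarrow> exp (phi b \<eta>) * cmod (b \<eta>)) (at \<eta> within U)"
          by (intro tendsto_intros hS hb)
        moreover have "exp (phi b \<eta>) * cmod (b \<eta>) = 1"
        proof -
          have "0 < cmod (b \<eta>)" using bp by linarith
          then show ?thesis by (simp add: ph exp_minus)
        qed
        ultimately show ?thesis by simp
      next
        case False
        then have e1: "cmod \<eta> = 1" using \<eta>cb(2) by simp
        have ph: "phi b \<eta> = 0" using e1 cinv_unit[OF e1] by (simp add: phi_def Lf_def)
        have "((\<lambda>z. exp (Re (S z)) * cmod (b z)) \<longlongrightarrow> exp (phi b \<eta>) * 1) (at \<eta> within U)"
          by (intro tendsto_intros hS lim1 e1)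
        then show ?thesis by (simp add: ph)
      qed
    next
      case False
      then have \<eta>in: "\<eta> \<in> ball c \<rho>" using \<eta>cb(1) by (simp add: less_le)
      then have "\<eta> \<notin> ball 0 1" using \<eta>U by (simp add: U_def)
      then have e1: "cmod \<eta> = 1" using \<eta>cb(2) by simp
      have icS: "isCont S \<eta>"
        using holomorphic_on_imp_continuous_on[OF holS] \<eta>in continuous_on_interior by fastforce
      have hS: "((\<lambda>z. Re (S z)) \<longlongrightarrow> Re (S \<eta>)) (at \<eta> within U)"
      proof -
        have "isCont (\<lambda>z. Re (S z)) \<eta>" using icS by (rule isCont_Re)
        then have "((\<lambda>z. Re (S z)) \<longlongrightarrow> Re (S \<eta>)) (at \<eta>)" by (simp add: isCont_def)
        then show ?thesis by (rule tendsto_within_subset) simp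
      qed
      have "((\<lambda>z. exp (Re (S z)) * cmod (b z)) \<longlongrightarrow> exp (Re (S \<eta>)) * 1) (at \<eta> within U)"
        by (intro tendsto_intros hS lim1 e1)
      then show ?thesis using Re0[OF \<eta>in e1] by simp
    qed
    then show "((\<lambda>z. cmod (\<Psi> z)) \<longlongrightarrow> 1) (at \<eta> within U)" by (simp add: normPsi)
  qed
  obtain p where p: "p \<in> U" using Une by blast
  have "\<Psi> constant_on U"
    by (rule maximum_modulus_principle[of \<Psi> U U p])
      (use Psi1 p openU connU holPsi in auto)
  then obtain k where k: "\<And>z. z \<in> U \<Longrightarrow> \<Psi> z = k" unfolding constant_on_def by blast
  show ?thesis using k holS unfolding U_def \<Psi>_def S_def c_def by blast
qed

lemma reflection_exists2:
  assumes hol: "b holomorphic_on ball 0 1" and le1: "\<forall>z\<in>ball 0 1. cmod (b z) \<le> 1"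
    and \<xi>: "\<xi> \<in> sphere 0 1" and \<epsilon>: "\<epsilon> > 0"
    and nspec: "\<forall>\<eta>\<in>sphere 0 1. dist \<eta> \<xi> < \<epsilon> \<longrightarrow> \<eta> \<notin> spec b"
  shows "\<exists>e>0. \<exists>g. g holomorphic_on ball \<xi> e \<and> (\<forall>z\<in>ball \<xi> e \<inter> ball 0 1. g z = b z)"
proof -
  have \<xi>n: "cmod \<xi> = 1" using \<xi> by simp
  have "\<xi> \<notin> spec b" using nspec \<xi> \<epsilon> by auto
  from lim_abs_one[OF this \<xi> le1]
  have "eventually (\<lambda>z. 1/2 < cmod (b z)) (at \<xi> within ball 0 1)"
    by (rule order_tendstoD) simp
  then obtain \<epsilon>' where \<epsilon>': "\<epsilon>' > 0" "\<forall>x\<in>ball 0 1. x \<noteq> \<xi> \<and> dist x \<xi> < \<epsilon>' \<longrightarrow> 1/2 < cmod (b x)"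
    unfolding eventually_at by blast
  define R0 where "R0 = min \<epsilon> \<epsilon>'"
  have half: "\<forall>y\<in>ball 0 1. dist y \<xi> < R0 \<longrightarrow> cmod (b y) > 1/2"
  proof (intro ballI impI)
    fix y assume y: "y \<in> ball 0 1" "dist y \<xi> < R0"
    then have "y \<noteq> \<xi>" using \<xi>n by auto
    then show "cmod (b y) > 1/2" using \<epsilon>'(2) y by (auto simp: R0_def)
  qed
  have nsp: "\<forall>y. cmod y = 1 \<longrightarrow> dist y \<xi> < R0 \<longrightarrow> y \<notin> spec b"
    using nspec by (auto simp: R0_def)
  define \<rho> where "\<rho> = R0 / 3"
  have \<rho>: "\<rho> > 0" "3 * \<rho> \<le> R0" using \<epsilon> \<epsilon>' by (auto simp: \<rho>_def R0_def)
  define c where "c = cc \<xi> \<rho>"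
  define S where "S = schwarzS (phi b) c \<rho>"
  have core: "S holomorphic_on ball c \<rho> \<and> (\<exists>k. \<forall>z \<in> ball c \<rho> \<inter> ball 0 1. exp (S z) * b z = k)"
    unfolding S_def c_def by (rule refl_core[OF hol le1 \<xi>n half nsp \<rho>])
  then obtain k where holS: "S holomorphic_on ball c \<rho>" and k: "\<forall>z \<in> ball c \<rho> \<inter> ball 0 1. exp (S z) * b z = k"
    by blast
  have cxi: "dist c \<xi> < \<rho>" using cc_props(3)[OF \<xi>n \<rho>(1)] by (simp add: c_def)
  define e where "e = \<rho> - dist c \<xi>"
  have e: "e > 0" using cxi by (simp add: e_def)
  have sub: "ball \<xi> e \<subseteq> ball c \<rho>"
  proof
    fix z assume "z \<in> ball \<xi> e"
    then have "dist \<xi> z < e" by simp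
    moreover have "dist c z \<le> dist c \<xi> + dist \<xi> z" by (rule dist_triangle)
    ultimately show "z \<in> ball c \<rho>" by (simp add: e_def)
  qed
  define g where "g = (\<lambda>z. k * exp (- S z))"
  have "g holomorphic_on ball \<xi> e"
    unfolding g_def using holomorphic_on_subset[OF holS sub] by (intro holomorphic_intros)
  moreover have "\<forall>z\<in>ball \<xi> e \<inter> ball 0 1. g z = b z"
  proof
    fix z assume z: "z \<in> ball \<xi> e \<inter> ball 0 1"
    then have "exp (S z) * b z = k" using k sub by blast
    then have "exp (- S z) * (exp (S z) * b z) = exp (- S z) * k" by simp
    then show "g z = b z" by (simp add: g_def exp_minus field_simps)
  qed
  ultimately show ?thesis using e by blast
qed

theorem lemma2p5:
  fixes b :: "complex \<Rightarrow> complex" and \<xi> :: complex and r :: real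
  assumes "Hinf_unit b"
    and "\<xi> \<in> sphere 0 1 - closure (spec b)"
    and "1/2 < r" and "r < 1"
  shows "norm (deriv b (complex_of_real r * \<xi>)) \<le> 4 * norm (bdry_deriv b \<xi>)"
proof -
  have hol: "b holomorphic_on ball 0 1" and bdd: "bounded (b ` ball 0 1)"
    and sup: "(SUP z\<in>ball 0 1. norm (b z)) = 1"
    using assms(1) unfolding Hinf_unit_def by auto
  have \<xi>s: "\<xi> \<in> sphere 0 1" and \<xi>nc: "\<xi> \<notin> closure (spec b)" using assms(2) by auto
  have n\<xi>: "cmod \<xi> = 1" using \<xi>s by simp
  have r0: "0 < r" using assms(3) by simp
  have bddn: "bdd_above ((\<lambda>z. norm (b z)) ` ball 0 1)"
  proof -
    obtain B where "\<forall>x\<in>b ` ball 0 1. norm x \<le> B" using bdd bounded_iff by blast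
    then show ?thesis by (auto intro!: bdd_aboveI[of _ B])
  qed
  have le1: "\<forall>z\<in>ball 0 1. cmod (b z) \<le> 1"
    using cSUP_upper[OF _ bddn] sup by fastforce
  obtain \<epsilon> where \<epsilon>: "\<epsilon> > 0" "\<forall>y\<in>spec b. \<not> dist y \<xi> < \<epsilon>"
    using \<xi>nc unfolding closure_approachable by blast
  have nspec: "\<forall>\<eta>\<in>sphere 0 1. dist \<eta> \<xi> < \<epsilon> \<longrightarrow> \<eta> \<notin> spec b"
    using \<epsilon>(2) by blast
  define z where "z = complex_of_real r * \<xi>"
  have nz: "cmod z = r" using n\<xi> r0 by (simp add: z_def norm_mult)
  have zb: "z \<in> ball 0 1" using nz assms(4) by simp
  show ?thesis
  proof (cases "\<exists>z0\<in>ball 0 1. cmod (b z0) = 1")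
    case True
    then obtain z0 where z0: "z0 \<in> ball 0 1" "cmod (b z0) = 1" by blast
    have "b constant_on ball 0 1"
      by (rule maximum_modulus_principle[OF hol open_ball connected_ball open_ball order_refl z0(1)])
        (use le1 z0 in auto)
    then obtain k where k: "\<And>x. x \<in> ball 0 1 \<Longrightarrow> b x = k" unfolding constant_on_def by blast
    have "eventually (\<lambda>x. b x = k) (nhds z)"
      using zb k by (intro eventually_nhds_in_open[THEN eventually_mono, of "ball 0 1"]) auto
    then have "deriv b z = deriv (\<lambda>_. k) z" by (rule deriv_cong_ev) simp
    then show ?thesis by (simp add: z_def)
  next
    case False
    then have lt: "\<forall>z\<in>ball 0 1. cmod (b z) < 1" using le1 by force
    obtain e g where e: "e > 0" and holg: "g holomorphic_on ball \<xi> e"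
      and gb: "\<forall>z\<in>ball \<xi> e \<inter> ball 0 1. g z = b z"
      using reflection_exists2[OF hol le1 \<xi>s \<epsilon>(1) nspec] by blast
    have ex: "\<exists>d. \<exists>e>0. \<exists>g. g holomorphic_on ball \<xi> e
       \<and> (\<forall>z\<in>ball \<xi> e \<inter> ball 0 1. g z = b z) \<and> d = deriv g \<xi>"
      using e holg gb by blast
    obtain e' g' where e': "e' > 0" and holg': "g' holomorphic_on ball \<xi> e'"
      and gb': "\<forall>z\<in>ball \<xi> e' \<inter> ball 0 1. g' z = b z"
      and bd: "bdry_deriv b \<xi> = deriv g' \<xi>"
      using someI_ex[OF ex] unfolding bdry_deriv_def by blast
    define m where "m = min e e'"
    have m0: "m > 0" using e e' by (simp add: m_def)
    have eqm: "g' x = g x" if "x \<in> ball \<xi> m" for x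
    proof (rule analytic_continuation_open[of "ball \<xi> m \<inter> ball 0 1" "ball \<xi> m" g' g x])
      show "ball \<xi> m \<inter> ball 0 1 \<noteq> {}"
      proof -
        define s where "s = min (m/2) (1/2)"
        have s: "0 < s" "s < m" "s \<le> 1/2" using m0 by (auto simp: s_def)
        have "\<xi> - complex_of_real (1 - s) * \<xi> = complex_of_real s * \<xi>" by (simp add: algebra_simps)
        then have "dist \<xi> (complex_of_real (1 - s) * \<xi>) = s"
          using s n\<xi> by (simp add: dist_norm norm_mult)
        moreover have "norm (complex_of_real (1 - s) * \<xi>) = 1 - s"
          using s n\<xi> by (simp add: norm_mult del: of_real_diff)
        ultimately have "complex_of_real (1 - s) * \<xi> \<in> ball \<xi> m \<inter> ball 0 1" using s by auto
        then show ?thesis by blast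
      qed
      show "g' holomorphic_on ball \<xi> m" using holg' by (rule holomorphic_on_subset) (auto simp: m_def)
      show "g holomorphic_on ball \<xi> m" using holg by (rule holomorphic_on_subset) (auto simp: m_def)
      show "\<And>z. z \<in> ball \<xi> m \<inter> ball 0 1 \<Longrightarrow> g' z = g z" using gb gb' by (auto simp: m_def)
    qed (use that in auto)
    have "eventually (\<lambda>x. g' x = g x) (nhds \<xi>)"
      using m0 eqm by (intro eventually_nhds_in_open[THEN eventually_mono, of "ball \<xi> m"]) auto
    then have bdg: "bdry_deriv b \<xi> = deriv g \<xi>" using bd by (simp add: deriv_cong_ev)
    have Dg: "(g has_field_derivative deriv g \<xi>) (at \<xi>)"
      using holomorphic_derivI[OF holg open_ball] e by simp
    have icg: "isCont g \<xi>" using Dg DERIV_isCont by blast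
    define c where "c = g \<xi>"
    have nc: "cmod c = 1"
    proof -
      have L1: "((\<lambda>z. cmod (b z)) \<longlongrightarrow> 1) (at \<xi> within ball 0 1)"
        by (rule lim_abs_one) (use nspec \<xi>s \<epsilon> le1 in auto)
      have "((\<lambda>z. cmod (g z)) \<longlongrightarrow> cmod (g \<xi>)) (at \<xi> within ball 0 1)"
        using icg by (intro tendsto_norm) (simp add: isCont_def tendsto_within_subset[OF _ subset_UNIV] continuous_within)
      moreover have "eventually (\<lambda>z. cmod (g z) = cmod (b z)) (at \<xi> within ball 0 1)"
      proof -
        have "eventually (\<lambda>z. z \<in> ball \<xi> e) (at \<xi> within ball 0 1)"
        proof -
          have "eventually (\<lambda>z. z \<in> ball \<xi> e) (at \<xi>)"
            using e by (intro eventually_at_in_open') auto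
          then show ?thesis using filter_leD[OF at_le[OF subset_UNIV]] by simp
        qed
        then show ?thesis by (auto simp: eventually_at_filter gb elim!: eventually_mono)
      qed
      ultimately have L2: "((\<lambda>z. cmod (b z)) \<longlongrightarrow> cmod (g \<xi>)) (at \<xi> within ball 0 1)"
        by (rule Lim_transform_eventually)
      have "\<not> trivial_limit (at \<xi> within ball 0 1)"
        using \<xi>s by (simp add: trivial_limit_within islimpt_ball)
      then show ?thesis using tendsto_unique[OF _ L2 L1] by (simp add: c_def)
    qed
    define a where "a = b z"
    have na: "cmod a < 1" using lt zb by (simp add: a_def)
    define \<beta> where "\<beta> = cmod (deriv g \<xi>)"
    define w where "w = (\<lambda>t::real. complex_of_real t * \<xi>)"
    define Q where "Q = (\<lambda>t. cmod ((g (w t) - g \<xi>) / (w t - \<xi>)))"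
    define LHS where "LHS = (\<lambda>t::real. (1 - r^2) * (1 + t) * (cmod (1 - cnj (g (w t)) * a))^2)"
    define RHS where "RHS = (\<lambda>t. (1 - (cmod a)^2) * 2 * Q t * (1 - t * r)^2)"
    have cnjxi: "cnj \<xi> * \<xi> = 1"
      using n\<xi> by (metis complex_norm_square mult.commute of_real_1 power_one)
    have ev_t: "eventually (\<lambda>t. t \<in> {max 0 (1 - e)<..<1}) (at_left (1::real))"
      by (rule eventually_at_left_real) (use e in auto)
    have ev: "eventually (\<lambda>t. LHS t \<le> RHS t) (at_left (1::real))"
      using ev_t
    proof eventually_elim
      case (elim t)
      have t: "0 < t" "t < 1" "1 - e < t" using elim by auto
      have nw: "cmod (w t) = t" using t n\<xi> by (simp add: w_def norm_mult)
      have "\<xi> - w t = complex_of_real (1 - t) * \<xi>" by (simp add: w_def algebra_simps)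
      then have dw: "cmod (w t - \<xi>) = 1 - t"
        using t n\<xi> by (simp add: norm_mult norm_minus_commute del: of_real_diff)
      have wb: "w t \<in> ball 0 1" using nw t by simp
      have we: "w t \<in> ball \<xi> e" using dw t by (simp add: dist_norm norm_minus_commute)
      have gw: "g (w t) = b (w t)" using gb wb we by auto
      have sp: "(1 - (cmod z)^2) * (1 - (cmod (w t))^2) * (cmod (1 - cnj (b (w t)) * b z))^2
         \<le> (1 - (cmod (b z))^2) * (1 - (cmod (b (w t)))^2) * (cmod (1 - cnj (w t) * z))^2"
        by (rule sp2[OF hol lt zb wb])
      have cwz: "cnj (w t) * z = complex_of_real (t * r)"
      proof -
        have "cnj (w t) * z = complex_of_real (t * r) * (cnj \<xi> * \<xi>)"
          by (simp add: w_def z_def algebra_simps)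
        then show ?thesis using cnjxi by simp
      qed
      have n1: "cmod (1 - cnj (w t) * z) = 1 - t * r"
      proof -
        have "cmod (1 - cnj (w t) * z) = cmod (complex_of_real (1 - t * r))" using cwz by simp
        also have "\<dots> = 1 - t * r" using t r0 assms(4) mult_lt1[of t r]
          by (simp del: of_real_diff)
        finally show ?thesis .
      qed
      have ngw: "cmod (g (w t)) \<le> 1" using gw le1 wb by simp
      have k1: "1 - (cmod (g (w t)))^2 \<le> 2 * cmod (c - g (w t))"
      proof -
        have "1 - (cmod (g (w t)))^2 = (1 - cmod (g (w t))) * (1 + cmod (g (w t)))"
          by (simp add: power2_eq_square algebra_simps)
        also have "\<dots> \<le> (1 - cmod (g (w t))) * 2"
          using ngw by (intro mult_left_mono) auto
        also have "1 - cmod (g (w t)) \<le> cmod (c - g (w t))"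
          using nc norm_triangle_ineq2[of c "g (w t)"] by simp
        finally show ?thesis using ngw by (smt (verit) mult.commute mult_right_mono)
      qed
      have Qt: "Q t * (1 - t) = cmod (c - g (w t))"
        using dw t by (simp add: Q_def c_def norm_divide norm_minus_commute)
      have "(1 - r^2) * (1 - t^2) * (cmod (1 - cnj (g (w t)) * a))^2
          \<le> (1 - (cmod a)^2) * (1 - (cmod (g (w t)))^2) * (1 - t * r)^2"
        using sp by (simp add: gw a_def nz nw n1)
      also have "\<dots> \<le> (1 - (cmod a)^2) * (2 * cmod (c - g (w t))) * (1 - t * r)^2"
        using k1 na sq1[OF na] by (intro mult_right_mono mult_left_mono) auto
      finally have "(LHS t) * (1 - t) \<le> (RHS t) * (1 - t)"
        unfolding LHS_def RHS_def Qt[symmetric] by (simp add: power2_eq_square algebra_simps)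
      then show ?case using t by (simp add: mult_le_cancel_right_pos)
    qed
    have wlim: "(w \<longlongrightarrow> \<xi>) (at_left (1::real))"
      unfolding w_def by (rule tendsto_eq_intros) (auto intro!: tendsto_eq_intros)
    have gwlim: "((\<lambda>t. g (w t)) \<longlongrightarrow> c) (at_left (1::real))"
      unfolding c_def by (rule isCont_tendsto_compose[OF icg wlim])
    have LL: "(LHS \<longlongrightarrow> (1 - r^2) * (1 + 1) * (cmod (1 - cnj c * a))^2) (at_left (1::real))"
      unfolding LHS_def by (intro tendsto_intros gwlim)
    have wat: "filterlim w (at \<xi>) (at_left (1::real))"
    proof (rule filterlim_atI[OF wlim])
      show "eventually (\<lambda>t. w t \<noteq> \<xi>) (at_left (1::real))"
        using ev_t
      proof eventually_elim
        case (elim t)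
        then have "t \<noteq> 1" by auto
        then show ?case using n\<xi> by (auto simp: w_def)
      qed
    qed
    have Qlim: "(Q \<longlongrightarrow> \<beta>) (at_left (1::real))"
    proof -
      have "((\<lambda>y. (g y - g \<xi>) / (y - \<xi>)) \<longlongrightarrow> deriv g \<xi>) (at \<xi>)"
        using Dg by (simp add: has_field_derivative_iff)
      then have "((\<lambda>t. (g (w t) - g \<xi>) / (w t - \<xi>)) \<longlongrightarrow> deriv g \<xi>) (at_left (1::real))"
        using filterlim_compose[OF _ wat] by (auto simp: o_def)
      then show ?thesis unfolding Q_def \<beta>_def by (rule tendsto_norm)
    qed
    have RL: "(RHS \<longlongrightarrow> (1 - (cmod a)^2) * 2 * \<beta> * (1 - 1 * r)^2) (at_left (1::real))"
      unfolding RHS_def by (intro tendsto_intros Qlim)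
    have J: "(1 - r^2) * (1 + 1) * (cmod (1 - cnj c * a))^2 \<le> (1 - (cmod a)^2) * 2 * \<beta> * (1 - 1 * r)^2"
      by (rule tendsto_le[OF trivial_limit_at_left_real RL LL ev])
    have "1 - cmod a \<le> cmod (1 - cnj c * a)"
      using norm_triangle_ineq2[of 1 "cnj c * a"] nc by (simp add: norm_mult)
    then have "(1 - cmod a)^2 \<le> (cmod (1 - cnj c * a))^2"
      using na by (intro power_mono) auto
    then have "(1 - r^2) * (1 - cmod a)^2 \<le> (1 - r^2) * (cmod (1 - cnj c * a))^2"
      using sq1[of "complex_of_real r"] r0 assms(4) by (intro mult_left_mono) auto
    moreover have "2 * ((1 - r^2) * (cmod (1 - cnj c * a))^2) \<le> 2 * ((1 - (cmod a)^2) * \<beta> * (1 - r)^2)"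
      using J by (simp add: algebra_simps)
    ultimately have h1: "(1 - r^2) * (1 - cmod a)^2 \<le> (1 - (cmod a)^2) * \<beta> * (1 - r)^2"
      by linarith
    have h2: "cmod (deriv b z) * (1 - r^2) \<le> 1 - (cmod a)^2"
      using deriv_bound[OF hol lt zb] by (simp add: nz a_def)
    have "cmod (deriv b z) \<le> 4 * \<beta>"
      by (rule final_alg[OF _ _ na r0 assms(4) _ h1 h2]) (auto simp: \<beta>_def)
    then show ?thesis by (simp add: z_def bdg \<beta>_def)
  qed
qed

end
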